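(* Let $\lambda>0$ and let $X_1,\dots,X_n$ be i.i.d. Poisson random variables with mean $\lambda$. For $z>0$ let $$\Delta=\min\left\{\frac12,\ \frac{C_{\mathrm{BE}}}{\sqrt n}\Big(3z^2+8z+3+\frac1z\Big)^{3/4}\right\}.$$ Then $$\Pr\Big\{\frac1n\sum_{i=1}^nX_i\ge z\ \Big|\ \lambda\Big\}\le\Big(\frac12+\Delta\Big)\Big(\frac{\lambda^ze^z}{z^ze^\lambda}\Big)^n\quad\text{for } z\ge\lambda,$$ $$\Pr\Big\{\frac1n\sum_{i=1}^nX_i\le z\ \Big|\ \lambda\Big\}\le\Big(\frac12+\Delta\Big)\Big(\frac{\lambda^ze^z}{z^ze^\lambda}\Big)^n\quad\text{for } 0<z\le\lambda.$$
   Context: $C_{\mathrm{BE}}$ denotes the absolute constant in the Berry–Esseen inequality: for i.i.d. $Y_1,Y_2,\dots$ distributed as $Y$ with $\mathbb{E}[Y]=0$, $\mathbb{E}[Y^2]>0$, $\mathbb{E}[|Y|^3]<\infty$, the cdf $F_n$ of $\sum_{i=1}^nY_i/\sqrt{n\mathbb{E}[Y^2]}$ satisfies $|F_n(y)-\Phi(y)|\le\frac{C_{\mathrm{BE}}}{\sqrt n}\frac{\mathbb{E}[|Y|^3]}{\mathbb{E}^{3/2}[Y^2]}$ for all $y,n$, where $\Phi$ is the standard normal cdf. *)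

theory Defs
  imports "HOL-Probability.Probability"
begin

definition std_normal_cdf :: "real \<Rightarrow> real" where
  "std_normal_cdf y = measure std_normal_distribution {..y}"

definition berry_esseen_const :: "real \<Rightarrow> bool" where
  "berry_esseen_const C \<longleftrightarrow>
     (\<forall>(D :: real measure) (n :: nat) (y :: real).
        prob_space D \<and> sets D = sets borel \<and>
        integrable D (\<lambda>x. \<bar>x\<bar> ^ 3) \<and>
        (\<integral>x. x \<partial>D) = 0 \<and> (\<integral>x. x\<^sup>2 \<partial>D) > 0 \<and> n \<ge> 1 \<longrightarrow>
        \<bar>measure (PiM {..<n} (\<lambda>_. D))
            {\<omega> \<in> space (PiM {..<n} (\<lambda>_. D)).
               (\<Sum>i<n. \<omega> i) / sqrt (real n * (\<integral>x. x\<^sup>2 \<partial>D)) \<le> y}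
          - std_normal_cdf y\<bar>
        \<le> C / sqrt (real n) * (\<integral>x. \<bar>x\<bar> ^ 3 \<partial>D) / (\<integral>x. x\<^sup>2 \<partial>D) powr (3/2))"

end

theory Submission
  imports Defs
begin


definition ff :: "nat \<Rightarrow> nat \<Rightarrow> real" where
  "ff j k = (\<Prod>i<j. (real k - real i))"

lemma ff_0[simp]: "ff 0 k = 1" by (simp add: ff_def)
lemma ff_Suc_0[simp]: "ff (Suc j) 0 = 0"
  unfolding ff_def by (subst prod.lessThan_Suc_shift) simp
lemma ff_Suc_Suc: "ff (Suc j) (Suc k) = real (Suc k) * ff j k"
  unfolding ff_def by (subst prod.lessThan_Suc_shift) simp

lemma ff_sums: "(\<lambda>k. z^k / fact k * ff j k) sums (z^j * exp (z::real))"
proof (induction j)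
  case 0
  then show ?case using exp_converges[of z] by (simp add: divide_inverse mult.commute)
next
  case (Suc j)
  have "(\<lambda>k. z^(Suc k) / fact (Suc k) * ff (Suc j) (Suc k)) = (\<lambda>k. z * (z^k / fact k * ff j k))"
    by (auto simp: ff_Suc_Suc fun_eq_iff field_simps simp del: of_nat_Suc)
  then have "(\<lambda>k. z^(Suc k) / fact (Suc k) * ff (Suc j) (Suc k)) sums (z * (z^j * exp z))"
    using sums_mult[OF Suc.IH, of z] by simp
  from sums_Suc_iff[THEN iffD1, OF this] show ?case by (simp add: mult_ac)
qed

lemma pois_ff_sums:
  assumes "z > 0"
  shows "(\<lambda>k. pmf (poisson_pmf z) k * ff j k) sums (z^j)"
proof -
  have "(\<lambda>k. exp (-z) * (z^k / fact k * ff j k)) sums (exp (-z) * (z^j * exp z))"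
    by (rule sums_mult[OF ff_sums])
  moreover have "exp (-z) * (z^j * exp z) = z^j" by (simp add: exp_minus field_simps)
  moreover have "(\<lambda>k. exp (-z) * (z^k / fact k * ff j k)) = (\<lambda>k. pmf (poisson_pmf z) k * ff j k)"
    using assms by (simp add: fun_eq_iff)
  ultimately show ?thesis by simp
qed



lemma pmf_nat_integral:
  fixes p :: "nat pmf" and h :: "nat \<Rightarrow> real"
  assumes "summable (\<lambda>k. pmf p k * \<bar>h k\<bar>)" "(\<lambda>k. pmf p k * h k) sums s"
  shows "integrable (measure_pmf p) h" "measure_pmf.expectation p h = s"
proof -
  have i: "integrable (count_space UNIV) (\<lambda>k. pmf p k *\<^sub>R h k)"
    using assms(1) by (simp add: integrable_count_space_nat_iff abs_mult)
  then show "integrable (measure_pmf p) h"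
    by (simp add: measure_pmf_eq_density integrable_density)
  have "measure_pmf.expectation p h = integral\<^sup>L (count_space UNIV) (\<lambda>k. pmf p k *\<^sub>R h k)"
    by (simp add: measure_pmf_eq_density integral_density)
  also have "\<dots> = s" using integral_count_space_nat[OF i] assms(2) by (simp add: sums_iff)
  finally show "measure_pmf.expectation p h = s" .
qed

definition Dz :: "real \<Rightarrow> real measure" where
  "Dz z = distr (measure_pmf (poisson_pmf z)) borel (\<lambda>k. real k - z)"

lemma ff_small:
  "ff 1 k = real k" "ff 2 k = real k * (real k - 1)"
  "ff 3 k = real k * (real k - 1) * (real k - 2)"
  "ff 4 k = real k * (real k - 1) * (real k - 2) * (real k - 3)"
  "ff (Suc (Suc 0)) k = real k * (real k - 1)"
  "ff (Suc (Suc (Suc 0))) k = real k * (real k - 1) * (real k - 2)"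
  "ff (Suc (Suc (Suc (Suc 0)))) k = real k * (real k - 1) * (real k - 2) * (real k - 3)"
  by (simp_all add: ff_def eval_nat_numeral)

lemma ff_one[simp]: "ff (Suc 0) k = real k"
  by (simp add: ff_def)

lemma abs4: "\<bar>(x::real)^4\<bar> = x^4"
  by (rule abs_of_nonneg) (simp add: zero_le_even_power)

context fixes z :: real assumes z: "z > 0"
begin

abbreviation "w k \<equiv> pmf (poisson_pmf z) k"

lemma w_nonneg: "w k \<ge> 0" by simp

lemma sY1: "(\<lambda>k. w k * (real k - z)) sums 0"
proof -
  have "(\<lambda>k. w k * ff 1 k + (-z) * (w k * ff 0 k)) sums (z^1 + (-z) * z^0)"
    by (intro sums_add sums_mult pois_ff_sums z)
  thus ?thesis by (simp add: ff_small algebra_simps)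
qed

lemma sY2: "(\<lambda>k. w k * (real k - z)^2) sums z"
proof -
  have "(\<lambda>k. w k * ff 2 k + ((1 - 2*z) * (w k * ff 1 k) + z^2 * (w k * ff 0 k)))
         sums (z^2 + ((1-2*z) * z^1 + z^2 * z^0))"
    by (intro sums_add sums_mult pois_ff_sums z)
  moreover have "z^2 + ((1-2*z) * z^1 + z^2 * z^0) = z" by (simp add: algebra_simps power2_eq_square)
  ultimately show ?thesis by (simp add: ff_small algebra_simps power2_eq_square)
qed

lemma sY4: "(\<lambda>k. w k * (real k - z)^4) sums (3*z^2 + z)"
proof -
  have "(\<lambda>k. w k * ff 4 k + ((6 - 4*z) * (w k * ff 3 k) + ((7 - 12*z + 6*z^2) * (w k * ff 2 k)
          + ((1 - 4*z + 6*z^2 - 4*z^3) * (w k * ff 1 k) + z^4 * (w k * ff 0 k)))))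
         sums (z^4 + ((6 - 4*z) * z^3 + ((7 - 12*z + 6*z^2) * z^2
          + ((1 - 4*z + 6*z^2 - 4*z^3) * z^1 + z^4 * z^0))))"
    by (intro sums_add sums_mult pois_ff_sums z)
  moreover have "z^4 + ((6 - 4*z) * z^3 + ((7 - 12*z + 6*z^2) * z^2
          + ((1 - 4*z + 6*z^2 - 4*z^3) * z^1 + z^4 * z^0))) = 3*z^2 + z"
    by (simp add: algebra_simps eval_nat_numeral)
  moreover have "\<And>k. w k * ff 4 k + ((6 - 4*z) * (w k * ff 3 k) + ((7 - 12*z + 6*z^2) * (w k * ff 2 k)
          + ((1 - 4*z + 6*z^2 - 4*z^3) * (w k * ff 1 k) + z^4 * (w k * ff 0 k))))
        = w k * (real k - z)^4"
    by (simp add: ff_small algebra_simps eval_nat_numeral)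
  ultimately show ?thesis by simp
qed

lemma summ_abs1: "summable (\<lambda>k. w k * \<bar>real k - z\<bar>)"
proof (rule summable_comparison_test)
  have "(\<lambda>k. w k * ff 1 k + z * (w k * ff 0 k)) sums (z^1 + z * z^0)"
    by (intro sums_add sums_mult pois_ff_sums z)
  thus "summable (\<lambda>k. w k * ff 1 k + z * (w k * ff 0 k))" by (rule sums_summable)
  have "w n * \<bar>real n - z\<bar> \<le> w n * (real n + z)" for n
    using z by (intro mult_left_mono) auto
  then show "\<exists>N. \<forall>n\<ge>N. norm (w n * \<bar>real n - z\<bar>) \<le> w n * ff 1 n + z * (w n * ff 0 n)"
    by (auto simp: abs_mult algebra_simps)
qed

lemma summ_abs2: "summable (\<lambda>k. w k * \<bar>(real k - z)^2\<bar>)"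
  using sums_summable[OF sY2] by simp

lemma summ_abs4: "summable (\<lambda>k. w k * \<bar>(real k - z)^4\<bar>)"
  using sums_summable[OF sY4] by (simp only: abs4)

lemma cube_le: "\<bar>x::real\<bar>^3 \<le> x^2 + x^4"
proof (cases "\<bar>x\<bar> \<le> 1")
  case True
  then have "\<bar>x\<bar>^3 \<le> \<bar>x\<bar>^2" by (intro power_decreasing) auto
  moreover have "x^4 \<ge> 0" by (simp add: zero_le_even_power)
  moreover have "\<bar>x\<bar>^2 = x^2" by simp
  ultimately show ?thesis by linarith
next
  case False
  then have "\<bar>x\<bar>^3 \<le> \<bar>x\<bar>^4" by (intro power_increasing) auto
  moreover have "\<bar>x\<bar>^4 = x^4" by (metis abs4 power_abs)
  moreover have "x^2 \<ge> 0" by simp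
  ultimately show ?thesis by linarith
qed

lemma summ_abs3: "summable (\<lambda>k. w k * \<bar>\<bar>real k - z\<bar>^3\<bar>)"
proof (rule summable_comparison_test)
  show "summable (\<lambda>k. w k * (real k - z)^2 + w k * (real k - z)^4)"
    using sums_summable[OF sY2] sums_summable[OF sY4] by (rule summable_add)
  show "\<exists>N. \<forall>n\<ge>N. norm (w n * \<bar>\<bar>real n - z\<bar>^3\<bar>) \<le> w n * (real n - z)^2 + w n * (real n - z)^4"
    using cube_le by (auto simp: abs_mult distrib_left[symmetric] intro!: mult_left_mono)
qed

lemma meas_shift: "(\<lambda>k::nat. real k - z) \<in> measurable (measure_pmf (poisson_pmf z)) borel"
  by simp

lemma Dz_facts:
  "prob_space (Dz z)" "sets (Dz z) = sets borel"
  "integrable (Dz z) (\<lambda>x. \<bar>x\<bar>^3)"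
  "(\<integral>x. x \<partial>Dz z) = 0" "(\<integral>x. x\<^sup>2 \<partial>Dz z) = z"
  "(\<integral>x. \<bar>x\<bar>^3 \<partial>Dz z) \<le> z * sqrt (3*z+1)"
proof -
  show "prob_space (Dz z)" unfolding Dz_def
    by (intro prob_space.prob_space_distr measure_pmf.prob_space_axioms) simp
  show "sets (Dz z) = sets borel" by (simp add: Dz_def)
  have i3: "integrable (poisson_pmf z) (\<lambda>k. \<bar>real k - z\<bar>^3)"
  proof -
    have "summable (\<lambda>k. w k * \<bar>real k - z\<bar>^3)" using summ_abs3 by simp
    from pmf_nat_integral(1)[OF summ_abs3 summable_sums[OF this]] show ?thesis .
  qed
  show "integrable (Dz z) (\<lambda>x. \<bar>x\<bar>^3)" unfolding Dz_def
    by (subst integrable_distr_eq) (simp_all add: i3)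
  show "(\<integral>x. x \<partial>Dz z) = 0" unfolding Dz_def
    by (subst integral_distr) (simp_all add: pmf_nat_integral(2)[OF summ_abs1 sY1])
  have e2: "measure_pmf.expectation (poisson_pmf z) (\<lambda>k. (real k - z)^2) = z"
    by (rule pmf_nat_integral(2)[OF summ_abs2 sY2])
  show "(\<integral>x. x\<^sup>2 \<partial>Dz z) = z" unfolding Dz_def
    by (subst integral_distr) (simp_all add: e2)
  have i2: "integrable (poisson_pmf z) (\<lambda>k. (real k - z)^2)" by (rule pmf_nat_integral(1)[OF summ_abs2 sY2])
  have i4: "integrable (poisson_pmf z) (\<lambda>k. (real k - z)^4)" by (rule pmf_nat_integral(1)[OF summ_abs4 sY4])
  have e4: "measure_pmf.expectation (poisson_pmf z) (\<lambda>k. (real k - z)^4) = 3*z^2+z"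
    by (rule pmf_nat_integral(2)[OF summ_abs4 sY4])
  define t where "t = sqrt (3*z+1)"
  have t: "t > 0" using z by (simp add: t_def)
  have pw: "\<bar>x\<bar>^3 \<le> (t * x^2 + x^4 / t) / 2" for x :: real
  proof -
    have "0 \<le> (\<bar>x\<bar>^2 - t * \<bar>x\<bar>)^2" by simp
    hence "2 * t * \<bar>x\<bar>^3 \<le> \<bar>x\<bar>^4 + t^2 * \<bar>x\<bar>^2" by (simp add: algebra_simps eval_nat_numeral)
    hence "2 * t * \<bar>x\<bar>^3 \<le> x^4 + t^2 * x^2" by (simp add: power_even_abs_numeral)
    with t show ?thesis by (simp add: field_simps power2_eq_square)
  qed
  have "(\<integral>x. \<bar>x\<bar>^3 \<partial>Dz z) = measure_pmf.expectation (poisson_pmf z) (\<lambda>k. \<bar>real k - z\<bar>^3)"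
    unfolding Dz_def by (subst integral_distr) simp_all
  also have "\<dots> \<le> measure_pmf.expectation (poisson_pmf z) (\<lambda>k. (t * (real k - z)^2 + (real k - z)^4 / t) / 2)"
    by (rule integral_mono[OF i3 _ pw]) (use i2 i4 in auto)
  also have "\<dots> = (t * z + (3*z^2+z) / t) / 2"
    using i2 i4 by (simp add: e2 e4)
  also have "\<dots> = z * sqrt (3*z+1)"
  proof -
    have "t^2 = 3*z+1" using z by (simp add: t_def)
    hence "3*z^2+z = z * t * t" by (metis (no_types, lifting) mult.assoc power2_eq_square distrib_left mult.commute mult_1 add.commute) 
    hence "(3*z^2+z) / t = z * t" using t by (simp add: field_simps)
    thus ?thesis by (simp add: t_def)
  qed
  finally show "(\<integral>x. \<bar>x\<bar>^3 \<partial>Dz z) \<le> z * sqrt (3*z+1)" .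
qed

end


lemma std_density_le1: "std_normal_density x \<le> 1"
proof -
  have "1 / sqrt (2*pi) \<le> 1" using pi_gt3 by (simp add: divide_le_eq)
  moreover have "exp (- x\<^sup>2 / 2) \<le> 1" by simp
  ultimately have "(1 / sqrt (2 * pi)) * exp (- x\<^sup>2 / 2) \<le> 1 * 1"
    by (intro mult_mono) auto
  thus ?thesis by (simp add: std_normal_density_def)
qed

lemma N_le_lborel:
  assumes A: "A \<in> sets borel"
  shows "emeasure std_normal_distribution A \<le> emeasure lborel A"
proof -
  have "emeasure std_normal_distribution A = (\<integral>\<^sup>+ x. ennreal (std_normal_density x) * indicator A x \<partial>lborel)"
    using A by (subst emeasure_density) auto
  also have "\<dots> \<le> (\<integral>\<^sup>+ x. indicator A x \<partial>lborel)"
    by (intro nn_integral_mono) (auto simp: std_density_le1 split: split_indicator)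
  also have "\<dots> = emeasure lborel A" using A by simp
  finally show ?thesis .
qed

interpretation N: prob_space std_normal_distribution
  using real_dist_normal_dist by (simp add: real_distribution_def)

lemma N_union: "A \<in> sets borel \<Longrightarrow> B \<in> sets borel \<Longrightarrow> A \<inter> B = {} \<Longrightarrow>
  measure std_normal_distribution (A \<union> B) = measure std_normal_distribution A + measure std_normal_distribution B"
  by (rule N.finite_measure_Union) auto

lemma N_sym: "emeasure std_normal_distribution {..<0} = emeasure std_normal_distribution {0<..}"
proof -
  have "emeasure std_normal_distribution {0<..} = (\<integral>\<^sup>+ x. ennreal (std_normal_density x) * indicator {0<..} x \<partial>lborel)"
    by (subst emeasure_density) auto
  also have "\<dots> = (\<integral>\<^sup>+ x. ennreal (std_normal_density x) * indicator {0<..} x \<partial>distr lborel borel uminus)"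
    by (simp add: lborel_distr_uminus)
  also have "\<dots> = (\<integral>\<^sup>+ x. ennreal (std_normal_density (-x)) * indicator {0<..} (-x) \<partial>lborel)"
    by (subst nn_integral_distr) auto
  also have "\<dots> = (\<integral>\<^sup>+ x. ennreal (std_normal_density x) * indicator {..<0} x \<partial>lborel)"
    by (intro nn_integral_cong) (auto simp: std_normal_density_def split: split_indicator)
  also have "\<dots> = emeasure std_normal_distribution {..<0}"
    by (subst emeasure_density) auto
  finally show ?thesis by simp
qed

lemma N_point: "measure std_normal_distribution {0} = 0"
proof -
  have "emeasure std_normal_distribution {0} \<le> emeasure lborel {0::real}" by (rule N_le_lborel) auto
  hence "emeasure std_normal_distribution {0} = 0" by simp
  thus ?thesis by (simp add: N.emeasure_eq_measure)
qed

lemma Phi0: "std_normal_cdf 0 = 1/2"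
proof -
  have s: "measure std_normal_distribution {..<0} = measure std_normal_distribution {0<..}"
    using N_sym by (simp add: N.emeasure_eq_measure)
  have d1: "{..0} \<inter> {0<..} = ({}::real set)" by auto
  have u1: "{..0} \<union> {0<..} = (UNIV::real set)" by auto
  have "measure std_normal_distribution ({..0} \<union> {0<..}) =
      measure std_normal_distribution {..0} + measure std_normal_distribution {0<..}"
    by (rule N_union) (auto simp: d1)
  hence 1: "1 = measure std_normal_distribution {..0} + measure std_normal_distribution {0<..}"
    using N.prob_space by (simp add: u1 space_density)
  have d2: "{..<0} \<inter> {0} = ({}::real set)" by auto
  have u2: "{..<0} \<union> {0} = {..0::real}" by auto
  have "measure std_normal_distribution ({..<0} \<union> {0}) =
      measure std_normal_distribution {..<0} + measure std_normal_distribution {0}"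
    by (rule N_union) (auto simp: d2)
  hence "measure std_normal_distribution {..0} = measure std_normal_distribution {..<0}"
    using N_point by (simp only: u2)
  with 1 s show ?thesis by (simp add: std_normal_cdf_def)
qed

lemma Phi_eps:
  assumes e: "e > 0"
  shows "std_normal_cdf (-e) \<ge> 1/2 - e"
proof -
  have "emeasure std_normal_distribution {-e<..0} \<le> emeasure lborel {-e<..0::real}"
    by (rule N_le_lborel) auto
  hence le: "measure std_normal_distribution {-e<..0} \<le> e"
    using e by (simp add: N.emeasure_eq_measure)
  have u: "{..-e} \<union> {-e<..(0::real)} = {..0}" using e by auto
  have d: "{..-e} \<inter> {-e<..(0::real)} = {}" by auto
  have "measure std_normal_distribution ({..-e} \<union> {-e<..0}) = measure std_normal_distribution {..-e} + measure std_normal_distribution {-e<..0}"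
    by (rule N_union) (auto simp: d)
  hence "measure std_normal_distribution {..0} = measure std_normal_distribution {..-e} + measure std_normal_distribution {-e<..0}"
    by (simp only: u)
  thus ?thesis using Phi0 le by (simp add: std_normal_cdf_def)
qed



lemma PiM_Dz:
  fixes n :: nat and z :: real
  assumes n: "n \<ge> 1"
  shows "PiM {..<n} (\<lambda>_. Dz z) = distr (measure_pmf (Pi_pmf {..<n} 0 (\<lambda>_. poisson_pmf z)))
            (PiM {..<n} (\<lambda>_. borel)) (\<lambda>x. \<lambda>i\<in>{..<n}. real (x i) - z)"
proof -
  define Q where "Q = Pi_pmf {..<n} 0 (\<lambda>_. poisson_pmf z)"
  define g where "g = (\<lambda>k::nat. real k - z)"
  interpret Q: prob_space "measure_pmf Q" by (rule measure_pmf.prob_space_axioms)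
  have "0 \<in> {..<n}" using n by auto
  hence I: "{..<n} \<noteq> {}" by blast
  have ind: "prob_space.indep_vars (measure_pmf Q) (\<lambda>_. count_space UNIV) (\<lambda>x f. f x) {..<n}"
    unfolding Q_def by (rule indep_vars_Pi_pmf) simp
  have ind2: "prob_space.indep_vars (measure_pmf Q) (\<lambda>_. borel) (\<lambda>i. g \<circ> (\<lambda>f. f i)) {..<n}"
    by (rule prob_space.indep_vars_compose[OF measure_pmf.prob_space_axioms ind]) simp
  have "distr Q (PiM {..<n} (\<lambda>_. borel)) (\<lambda>x. \<lambda>i\<in>{..<n}. (g \<circ> (\<lambda>f. f i)) x)
        = PiM {..<n} (\<lambda>i. distr Q borel (g \<circ> (\<lambda>f. f i)))"
    using prob_space.indep_vars_iff_distr_eq_PiM'[OF measure_pmf.prob_space_axioms[of Q] I, where M'="\<lambda>_. borel" and X="\<lambda>i. g \<circ> (\<lambda>f. f i)"] ind2 by simp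
  also have "\<dots> = PiM {..<n} (\<lambda>_. Dz z)"
  proof (rule PiM_cong)
    fix i assume i: "i \<in> {..<n}"
    have "distr Q borel (g \<circ> (\<lambda>f. f i)) = distr (distr Q (count_space UNIV) (\<lambda>f. f i)) borel g"
      by (subst distr_distr) simp_all
    also have "distr Q (count_space UNIV) (\<lambda>f. f i) = measure_pmf (map_pmf (\<lambda>f. f i) Q)"
      by (simp add: map_pmf_rep_eq)
    also have "map_pmf (\<lambda>f. f i) Q = poisson_pmf z"
      unfolding Q_def using i by (subst Pi_pmf_component) auto
    finally show "distr Q borel (g \<circ> (\<lambda>f. f i)) = Dz z" by (simp add: Dz_def g_def o_def)
  qed simp
  finally show ?thesis by (simp add: Q_def g_def o_def)
qed

lemma link:
  fixes n :: nat and z s y :: real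
  assumes n: "n \<ge> 1"
  shows "measure (PiM {..<n} (\<lambda>_. Dz z)) {\<omega> \<in> space (PiM {..<n} (\<lambda>_. Dz z)). (\<Sum>i<n. \<omega> i) / s \<le> y}
       = measure_pmf.prob (Pi_pmf {..<n} 0 (\<lambda>_. poisson_pmf z)) {x. (\<Sum>i<n. (real (x i) - z)) / s \<le> y}"
proof -
  let ?M = "PiM {..<n} (\<lambda>_. borel :: real measure)"
  let ?f = "\<lambda>x. \<lambda>i\<in>{..<n}. real (x i) - z"
  have sp: "space (PiM {..<n} (\<lambda>_. Dz z)) = space ?M"
    by (simp add: PiM_Dz[OF n])
  have f: "?f \<in> measurable (measure_pmf (Pi_pmf {..<n} 0 (\<lambda>_. poisson_pmf z))) ?M"
    by (auto simp: space_PiM)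
  have S: "{\<omega> \<in> space ?M. (\<Sum>i<n. \<omega> i) / s \<le> y} \<in> sets ?M"
    by measurable
  show ?thesis
    unfolding sp
    apply (subst PiM_Dz[OF n])
    apply (subst measure_distr[OF f S])
    apply (intro arg_cong[where f="measure _"])
    apply (auto simp: space_PiM)
    done
qed



lemma pmf_ratio:
  fixes n :: nat and lam z :: real and x :: "nat \<Rightarrow> nat"
  assumes lam: "lam > 0" and z: "z > 0"
  shows "pmf (Pi_pmf {..<n} 0 (\<lambda>_. poisson_pmf lam)) x =
    (lam/z) powr (\<Sum>i<n. real (x i)) * exp (real n * (z - lam)) * pmf (Pi_pmf {..<n} 0 (\<lambda>_. poisson_pmf z)) x"
proof (cases "\<forall>i. i \<notin> {..<n} \<longrightarrow> x i = 0")
  case False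
  show ?thesis by (simp only: pmf_Pi[OF finite_lessThan] if_not_P[OF False])
next
  case True
  have fac: "lam ^ m / fact m * exp (- lam) = (lam/z)^m * exp (z - lam) * (z ^ m / fact m * exp (- z))" for m
  proof -
    have "(lam/z)^m * z^m = lam^m" using z by (simp add: power_divide)
    moreover have "exp (z - lam) * exp (-z) = exp (-lam)" by (simp add: exp_diff exp_minus field_simps)
    ultimately show ?thesis using z by (simp add: field_simps)
  qed
  have "pmf (Pi_pmf {..<n} 0 (\<lambda>_. poisson_pmf lam)) x = (\<Prod>i<n. lam ^ x i / fact (x i) * exp (- lam))"
    using True lam by (simp add: pmf_Pi)
  also have "\<dots> = (\<Prod>i<n. (lam/z)^(x i) * exp (z - lam) * (z ^ x i / fact (x i) * exp (- z)))"
    by (simp only: fac)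
  also have "\<dots> = (\<Prod>i<n. (lam/z)^(x i)) * exp (z - lam) ^ n * (\<Prod>i<n. z ^ x i / fact (x i) * exp (- z))"
    by (simp only: prod.distrib prod_constant card_lessThan)
  also have "(\<Prod>i<n. (lam/z)^(x i)) = (lam/z) powr (\<Sum>i<n. real (x i))"
  proof -
    have "(\<Prod>i<n. (lam/z)^(x i)) = (lam/z)^(\<Sum>i<n. x i)" by (simp add: power_sum)
    also have "\<dots> = (lam/z) powr real (\<Sum>i<n. x i)" using lam z by (simp only: powr_realpow divide_pos_pos)
    finally show ?thesis by simp
  qed
  also have "exp (z - lam) ^ n = exp (real n * (z - lam))" by (simp add: exp_of_nat_mult)
  also have "(\<Prod>i<n. z ^ x i / fact (x i) * exp (- z)) = pmf (Pi_pmf {..<n} 0 (\<lambda>_. poisson_pmf z)) x"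
    using True z by (simp add: pmf_Pi)
  finally show ?thesis .
qed

lemma prob_dom:
  fixes p q :: "'a pmf"
  assumes "\<And>x. x \<in> A \<Longrightarrow> pmf p x \<le> K * pmf q x" "K \<ge> 0"
  shows "measure_pmf.prob p A \<le> K * measure_pmf.prob q A"
proof -
  have "emeasure (measure_pmf p) A = (\<integral>\<^sup>+ x. indicator A x \<partial>measure_pmf p)" by simp
  also have "\<dots> = (\<integral>\<^sup>+ x. ennreal (pmf p x) * indicator A x \<partial>count_space UNIV)"
    by (rule nn_integral_measure_pmf)
  also have "\<dots> \<le> (\<integral>\<^sup>+ x. ennreal K * (ennreal (pmf q x) * indicator A x) \<partial>count_space UNIV)"
    using assms by (intro nn_integral_mono) (auto simp: ennreal_mult[symmetric] split: split_indicator)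
  also have "\<dots> = ennreal K * (\<integral>\<^sup>+ x. ennreal (pmf q x) * indicator A x \<partial>count_space UNIV)"
    by (rule nn_integral_cmult) simp
  also have "(\<integral>\<^sup>+ x. ennreal (pmf q x) * indicator A x \<partial>count_space UNIV) = emeasure (measure_pmf q) A"
    by (simp add: nn_integral_measure_pmf[symmetric])
  finally have "ennreal (measure_pmf.prob p A) \<le> ennreal (K * measure_pmf.prob q A)"
    using assms(2) by (simp add: measure_pmf.emeasure_eq_measure ennreal_mult)
  thus ?thesis using assms(2) by (simp add: ennreal_le_iff)
qed

lemma chern:
  fixes n :: nat and lam z :: real
  assumes lam: "lam > 0" and z: "z > 0"
  shows "(lam/z) powr (real n * z) * exp (real n * (z - lam)) = ((lam powr z * exp z) / (z powr z * exp lam)) ^ n"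
proof -
  have "(lam/z) powr (real n * z) = ((lam/z) powr z) powr real n" by (simp add: powr_powr mult.commute)
  also have "\<dots> = ((lam/z) powr z) ^ n" using lam z by (simp add: powr_realpow)
  also have "(lam/z) powr z = lam powr z / z powr z" using lam z by (simp add: powr_divide)
  finally have 1: "(lam/z) powr (real n * z) = (lam powr z / z powr z) ^ n" .
  have 2: "exp (real n * (z - lam)) = (exp z / exp lam) ^ n" by (simp add: exp_of_nat_mult exp_diff)
  show ?thesis unfolding 1 2 by (simp add: power_mult_distrib[symmetric])
qed

lemma ratio_bound:
  fixes z :: real assumes z: "z > 0"
  shows "z * sqrt (3*z+1) / z powr (3/2) \<le> (3 * z\<^sup>2 + 8 * z + 3 + 1 / z) powr (3/4)"
proof -
  define K where "K = 3 * z\<^sup>2 + 8 * z + 3 + 1 / z"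
  have K1: "K \<ge> 1" using z by (simp add: K_def add_nonneg_nonneg)
  have "z powr (3/2) = z powr (1 + 1/2)" by simp
  also have "\<dots> = z powr 1 * z powr (1/2)" by (rule powr_add)
  finally have "z powr (3/2) = z powr 1 * z powr (1/2)" .
  then have zp: "z powr (3/2) = z * sqrt z" using z by (simp add: powr_half_sqrt)
  have "z * sqrt (3*z+1) / z powr (3/2) = sqrt ((3*z+1)/z)"
    using z by (simp add: zp real_sqrt_divide)
  also have "\<dots> \<le> sqrt K"
    using z by (intro real_sqrt_le_mono) (simp add: K_def add_divide_distrib power2_eq_square add_nonneg_nonneg)
  also have "\<dots> = K powr (1/2)" using K1 by (simp add: powr_half_sqrt)
  also have "\<dots> \<le> K powr (3/4)" using K1 by (intro powr_mono) auto
  finally show ?thesis by (simp add: K_def)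
qed

lemma E3_pos:
  fixes z :: real assumes z: "z > 0"
  shows "(\<integral>x. \<bar>x\<bar>^3 \<partial>Dz z) > 0"
proof -
  have sm: "summable (\<lambda>k. pmf (poisson_pmf z) k * \<bar>real k - z\<bar>^3)" using summ_abs3[OF z] by simp
  have "(\<integral>x. \<bar>x\<bar>^3 \<partial>Dz z) = measure_pmf.expectation (poisson_pmf z) (\<lambda>k. \<bar>real k - z\<bar>^3)"
    unfolding Dz_def by (subst integral_distr) simp_all
  also have "\<dots> = (\<Sum>k. pmf (poisson_pmf z) k * \<bar>real k - z\<bar>^3)"
    by (rule pmf_nat_integral(2)[OF _ summable_sums[OF sm]]) (use summ_abs3[OF z] in simp)
  also have "\<dots> > 0"
    by (rule suminf_pos2[OF sm, of 0]) (use z in auto)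
  finally show ?thesis .
qed



theorem corollary4:
  fixes C lam z :: real and n :: nat
  assumes C: "berry_esseen_const C"
    and lam: "lam > 0" and z: "z > 0" and n: "n \<ge> 1"
  defines "\<Delta> \<equiv> min (1/2) (C / sqrt (real n) * (3 * z\<^sup>2 + 8 * z + 3 + 1 / z) powr (3/4))"
  defines "B \<equiv> (1/2 + \<Delta>) * ((lam powr z * exp z) / (z powr z * exp lam)) ^ n"
  defines "P \<equiv> Pi_pmf {..<n} 0 (\<lambda>_. poisson_pmf lam)"
  shows "(z \<ge> lam \<longrightarrow> measure_pmf.prob P {X. (\<Sum>i<n. real (X i)) / real n \<ge> z} \<le> B)
       \<and> (z \<le> lam \<longrightarrow> measure_pmf.prob P {X. (\<Sum>i<n. real (X i)) / real n \<le> z} \<le> B)"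
proof -
  define Q where "Q = Pi_pmf {..<n} 0 (\<lambda>_. poisson_pmf z)"
  define c where "c = ((lam powr z * exp z) / (z powr z * exp lam)) ^ n"
  define E3 where "E3 = (\<integral>x. \<bar>x\<bar>^3 \<partial>Dz z)"
  define \<beta>0 where "\<beta>0 = C / sqrt (real n) * E3 / z powr (3/2)"
  define \<beta> where "\<beta> = C / sqrt (real n) * (3 * z\<^sup>2 + 8 * z + 3 + 1 / z) powr (3/4)"
  define s where "s = sqrt (real n * z)"
  define F where "F = (\<lambda>y. measure_pmf.prob Q {x. (\<Sum>i<n. (real (x i) - z)) / s \<le> y})"
  have npos: "real n > 0" using n by simp
  have spos: "s > 0" using npos z by (simp add: s_def)
  have cpos: "c \<ge> 0" using lam z by (simp add: c_def)
  note DF = Dz_facts[OF z]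
  have E3pos: "E3 > 0" using E3_pos[OF z] by (simp add: E3_def)
  have BE: "\<bar>F y - std_normal_cdf y\<bar> \<le> \<beta>0" for y
  proof -
    have "\<bar>measure (PiM {..<n} (\<lambda>_. Dz z))
            {\<omega> \<in> space (PiM {..<n} (\<lambda>_. Dz z)).
               (\<Sum>i<n. \<omega> i) / sqrt (real n * (\<integral>x. x\<^sup>2 \<partial>Dz z)) \<le> y}
          - std_normal_cdf y\<bar>
        \<le> C / sqrt (real n) * (\<integral>x. \<bar>x\<bar> ^ 3 \<partial>Dz z) / (\<integral>x. x\<^sup>2 \<partial>Dz z) powr (3/2)"
      by (rule C[unfolded berry_esseen_const_def, rule_format, of "Dz z" n y]) (use DF z n in auto)
    thus ?thesis unfolding F_def \<beta>0_def E3_def s_def Q_def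
      using DF(5) link[OF n, of z "sqrt (real n * z)" y] by simp
  qed
  have Cnn: "C \<ge> 0"
  proof (rule ccontr)
    assume "\<not> C \<ge> 0"
    hence "\<beta>0 < 0" using E3pos npos z by (simp add: \<beta>0_def mult_neg_pos divide_neg_pos)
    with BE[of 0] show False by linarith
  qed
  have "E3 / z powr (3/2) \<le> z * sqrt (3*z+1) / z powr (3/2)"
    using DF(6) z by (simp add: E3_def divide_right_mono)
  also have "\<dots> \<le> (3 * z\<^sup>2 + 8 * z + 3 + 1 / z) powr (3/4)" by (rule ratio_bound[OF z])
  finally have "C / sqrt (real n) * (E3 / z powr (3/2)) \<le> C / sqrt (real n) * (3 * z\<^sup>2 + 8 * z + 3 + 1 / z) powr (3/4)"
    using Cnn by (intro mult_left_mono) auto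
  hence "\<beta>0 \<le> \<beta>" unfolding \<beta>0_def \<beta>_def by simp
  hence D: "min 1 (1/2 + \<beta>0) \<le> 1/2 + \<Delta>" by (simp add: \<Delta>_def \<beta>_def)
  have sum_eq: "(\<Sum>i<n. (real (x i) - z)) = (\<Sum>i<n. real (x i)) - real n * z" for x :: "nat \<Rightarrow> nat"
    by (simp add: sum_subtractf)
  show ?thesis
  proof (intro conjI impI)
    assume lz: "lam \<le> z"
    let ?A = "{X. (\<Sum>i<n. real (X i)) / real n \<ge> z}"
    have dom: "pmf P x \<le> c * pmf Q x" if "x \<in> ?A" for x
    proof -
      have S: "real n * z \<le> (\<Sum>i<n. real (x i))" using that npos by (simp add: le_divide_eq mult.commute)
      have "(lam/z) powr (\<Sum>i<n. real (x i)) \<le> (lam/z) powr (real n * z)"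
        using lam z lz S by (intro powr_mono') auto
      hence "(lam/z) powr (\<Sum>i<n. real (x i)) * exp (real n * (z - lam)) * pmf Q x \<le>
             (lam/z) powr (real n * z) * exp (real n * (z - lam)) * pmf Q x"
        by (intro mult_right_mono) auto
      thus ?thesis unfolding P_def Q_def pmf_ratio[OF lam z] chern[OF lam z] c_def .
    qed
    have "measure_pmf.prob Q ?A \<le> 1/2 + \<beta>0"
    proof (rule field_le_epsilon)
      fix e :: real assume e: "e > 0"
      have sub: "{x. (\<Sum>i<n. (real (x i) - z)) / s \<le> -e} \<subseteq> UNIV - ?A"
      proof
        fix x assume "x \<in> {x. (\<Sum>i<n. (real (x i) - z)) / s \<le> -e}"
        hence "(\<Sum>i<n. real (x i)) - real n * z < 0" using spos e
          by (simp add: sum_eq divide_le_eq) (smt (verit) mult_pos_pos)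
        hence "(\<Sum>i<n. real (x i)) / real n < z" using npos by (simp add: divide_less_eq mult.commute)
        thus "x \<in> UNIV - ?A" by auto
      qed
      have "F (-e) \<le> measure_pmf.prob Q (UNIV - ?A)"
        unfolding F_def by (rule measure_pmf.finite_measure_mono[OF sub]) simp
      also have "\<dots> = 1 - measure_pmf.prob Q ?A"
        by (subst measure_pmf.prob_compl[symmetric]) auto
      finally have "measure_pmf.prob Q ?A \<le> 1 - F (-e)" by simp
      also have "\<dots> \<le> 1 - (std_normal_cdf (-e) - \<beta>0)" using BE[of "-e"] by linarith
      also have "\<dots> \<le> 1/2 + \<beta>0 + e" using Phi_eps[OF e] by linarith
      finally show "measure_pmf.prob Q ?A \<le> 1/2 + \<beta>0 + e" .
    qed
    hence "measure_pmf.prob Q ?A \<le> min 1 (1/2 + \<beta>0)" using measure_pmf.prob_le_1[of Q ?A] by simp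
    hence "measure_pmf.prob Q ?A \<le> 1/2 + \<Delta>" using D by linarith
    have "measure_pmf.prob P ?A \<le> c * measure_pmf.prob Q ?A" by (rule prob_dom[OF dom cpos])
    also have "\<dots> \<le> c * (1/2 + \<Delta>)" by (intro mult_left_mono) fact+
    finally show "measure_pmf.prob P ?A \<le> B" by (simp add: B_def c_def mult.commute)
  next
    assume lz: "z \<le> lam"
    let ?A = "{X. (\<Sum>i<n. real (X i)) / real n \<le> z}"
    have dom: "pmf P x \<le> c * pmf Q x" if "x \<in> ?A" for x
    proof -
      have S: "(\<Sum>i<n. real (x i)) \<le> real n * z" using that npos by (simp add: divide_le_eq mult.commute)
      have "(lam/z) powr (\<Sum>i<n. real (x i)) \<le> (lam/z) powr (real n * z)"
        using lam z lz S by (intro powr_mono) auto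
      hence "(lam/z) powr (\<Sum>i<n. real (x i)) * exp (real n * (z - lam)) * pmf Q x \<le>
             (lam/z) powr (real n * z) * exp (real n * (z - lam)) * pmf Q x"
        by (intro mult_right_mono) auto
      thus ?thesis unfolding P_def Q_def pmf_ratio[OF lam z] chern[OF lam z] c_def .
    qed
    have "?A = {x. (\<Sum>i<n. (real (x i) - z)) / s \<le> 0}"
      using spos npos by (auto simp: sum_eq divide_le_eq mult.commute)
    hence "measure_pmf.prob Q ?A = F 0" by (simp add: F_def)
    also have "\<dots> \<le> 1/2 + \<beta>0" using BE[of 0] Phi0 by linarith
    finally have "measure_pmf.prob Q ?A \<le> 1/2 + \<beta>0" .
    hence "measure_pmf.prob Q ?A \<le> min 1 (1/2 + \<beta>0)" using measure_pmf.prob_le_1[of Q ?A] by simp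
    hence "measure_pmf.prob Q ?A \<le> 1/2 + \<Delta>" using D by linarith
    have "measure_pmf.prob P ?A \<le> c * measure_pmf.prob Q ?A" by (rule prob_dom[OF dom cpos])
    also have "\<dots> \<le> c * (1/2 + \<Delta>)" by (intro mult_left_mono) fact+
    finally show "measure_pmf.prob P ?A \<le> B" by (simp add: B_def c_def mult.commute)
  qed
qed

end
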